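(* Assume that $\mathfrak{c} = 2^{<\mathfrak{c}}$ and that $\mathfrak{c}$ is a regular cardinal, where $\mathfrak{c}=|\mathbb{R}|$. Then there are $2^{2^{\mathfrak{c}}}$ many $\sigma$-algebras on $\mathbb{R}$ that contain $[\mathbb{R}]^{\leq\omega}$ and none of them is equal to $\mathcal{B}_f(\mathbb{R})$ for any two-point selection $f$ on $\mathbb{R}$.
   Context: $[\mathbb{R}]^{\leq\omega}$ is the family of all countable subsets of $\mathbb{R}$; $2^{<\mathfrak{c}} = \sup\{2^\lambda : \lambda<\mathfrak{c}\ \text{a cardinal}\}$. A two-point selection on $\mathbb{R}$ is a function $f$ from the set of two-element subsets of $\mathbb{R}$ to $\mathbb{R}$ with $f(F)\in F$. Write $r<_f s$ if $f(\{r,s\})=r$ ($r\ne s$), $(\leftarrow,r)_f=\{x: x<_f r\}$, $(r,\rightarrow)_f=\{x: r<_f x\}$. The topology $\tau_f$ on $\mathbb{R}$ is generated by all sets $(\leftarrow,r)_f$, $(r,\rightarrow)_f$, $r\in\mathbb{R}$, and $\mathcal{B}_f(\mathbb{R})$ is the $\sigma$-algebra generated by $\tau_f$. *)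

theory Defs
  imports "HOL-Analysis.Analysis" "HOL-Library.Equipollence"
begin

text \<open>c = 2^{<c}: sup of 2^lambda over cardinals lambda < c is at most c
  (it is always at least c). Cardinals below c are realised by subsets of the reals.\<close>
definition c_eq_two_less_c :: bool where
  "c_eq_two_less_c \<longleftrightarrow>
     (\<forall>A::real set. A \<prec> (UNIV::real set) \<longrightarrow> Pow A \<lesssim> (UNIV::real set))"

definition c_regular :: bool where
  "c_regular \<longleftrightarrow> regularCard (card_of (UNIV::real set))"

definition two_point_selection :: "(real set \<Rightarrow> real) \<Rightarrow> bool" where
  "two_point_selection f \<longleftrightarrow> (\<forall>r s. r \<noteq> s \<longrightarrow> f {r, s} \<in> {r, s})"

definition sel_less :: "(real set \<Rightarrow> real) \<Rightarrow> real \<Rightarrow> real \<Rightarrow> bool" where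
  "sel_less f r s \<longleftrightarrow> r \<noteq> s \<and> f {r, s} = r"

definition sel_topology :: "(real set \<Rightarrow> real) \<Rightarrow> real topology" where
  "sel_topology f = topology_generated_by
     ({{x. sel_less f x r} | r. True} \<union> {{x. sel_less f r x} | r. True})"

definition sel_borel :: "(real set \<Rightarrow> real) \<Rightarrow> real set set" where
  "sel_borel f = sigma_sets UNIV {U. openin (sel_topology f) U}"

end

theory Submission
  imports Defs "HOL-Library.Nat_Bijection"
begin

definition iota :: "real \<Rightarrow> nat set" where
  "iota x = {to_nat (q::rat) | q. of_rat q < x}"

lemma inj_iota: "inj iota"
proof -
  have *: "iota x \<noteq> iota y" if xy: "x < y" for x y
  proof -
    obtain q where q: "x < of_rat q" "of_rat q < y" using of_rat_dense[OF xy] by blast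
    have "to_nat q \<in> iota y" using q unfolding iota_def by auto
    moreover have "to_nat q \<notin> iota x" using q unfolding iota_def by auto
    ultimately show ?thesis by blast
  qed
  show ?thesis
  proof (rule injI)
    fix x y assume "iota x = iota y"
    then show "x = y" using *[of x y] *[of y x] by (metis linorder_neq_iff)
  qed
qed

definition piN :: "nat set \<Rightarrow> real" where
  "piN = (SOME p. inj p)"

lemma inj_piN:
  assumes "c_eq_two_less_c"
  shows "inj piN"
proof -
  let ?A = "range (of_nat :: nat \<Rightarrow> real)"
  have cA: "countable ?A" by simp
  have "\<not> ?A \<approx> (UNIV::real set)"
  proof
    assume "?A \<approx> (UNIV::real set)"
    then have "countable (UNIV::real set)" by (rule countable_eqpoll[OF cA eqpoll_sym])
    then show False using uncountable_UNIV_real by blast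
  qed
  moreover have "?A \<lesssim> (UNIV::real set)" by (rule subset_imp_lepoll) simp
  ultimately have Al: "?A \<prec> (UNIV::real set)"
    unfolding lesspoll_def by simp
  have H: "\<forall>A::real set. A \<prec> (UNIV::real set) \<longrightarrow> Pow A \<lesssim> (UNIV::real set)" using assms unfolding c_eq_two_less_c_def .
  have "Pow ?A \<lesssim> (UNIV::real set)" using H[rule_format, OF Al] .
  then obtain f :: "real set \<Rightarrow> real" where f: "inj_on f (Pow ?A)" unfolding lepoll_def by (elim exE conjE) blast
  have "inj (\<lambda>M. f (of_nat ` M :: real set))"
  proof (rule injI)
    fix M N :: "nat set" assume "f (of_nat ` M :: real set) = f (of_nat ` N)"
    then have "(of_nat ` M :: real set) = of_nat ` N"
      by (rule inj_onD[OF f]) auto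
    then show "M = N" by (metis inj_image_eq_iff inj_of_nat)
  qed
  then have "\<exists>p::nat set \<Rightarrow> real. inj p" by blast
  then show ?thesis unfolding piN_def by (rule someI_ex)
qed

definition gS :: "(nat \<Rightarrow> real) \<Rightarrow> real" where
  "gS h = piN {prod_encode (n, m) | n m. m \<in> iota (h n)}"

lemma inj_gS:
  assumes "c_eq_two_less_c"
  shows "inj gS"
proof (rule injI)
  fix h h' assume "gS h = gS h'"
  then have eq: "{prod_encode (n, m) | n m. m \<in> iota (h n)} = {prod_encode (n, m) | n m. m \<in> iota (h' n)}"
    using inj_piN[OF assms] unfolding gS_def inj_def by blast
  have "iota (h n) = iota (h' n)" for n
  proof -
    have "m \<in> iota (h n) \<longleftrightarrow> prod_encode (n, m) \<in> {prod_encode (n, m) | n m. m \<in> iota (h n)}" for m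
      by (auto simp: prod_encode_eq)
    moreover have "m \<in> iota (h' n) \<longleftrightarrow> prod_encode (n, m) \<in> {prod_encode (n, m) | n m. m \<in> iota (h' n)}" for m
      by (auto simp: prod_encode_eq)
    ultimately show ?thesis using eq by blast
  qed
  then show "h = h'" using inj_iota by (auto simp: inj_def)
qed

definition XB :: "real set \<Rightarrow> (nat \<Rightarrow> real) set" where
  "XB B = {p. \<exists>k. p (2*k+1) = piN {n. p (2*n) \<in> B}}"

definition YB :: "real set \<Rightarrow> real set" where
  "YB B = gS ` XB B"

definition Sig :: "real set set \<Rightarrow> real set set" where
  "Sig AA = sigma_sets UNIV ({A. countable A} \<union> YB ` AA)"

lemma sep_struct:
  assumes "S \<in> sigma_sets (UNIV::'a set) ({A. countable A} \<union> Y ` AA)"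
  shows "\<exists>G0 C. countable G0 \<and> G0 \<subseteq> AA \<and> countable C \<and>
     (\<forall>x y. x \<notin> C \<longrightarrow> y \<notin> C \<longrightarrow> (\<forall>A\<in>G0. x \<in> Y A \<longleftrightarrow> y \<in> Y A) \<longrightarrow> (x \<in> S \<longleftrightarrow> y \<in> S))"
  using assms
proof (induction rule: sigma_sets.induct)
  case (Basic a)
  then show ?case
  proof
    assume "a \<in> {A. countable A}"
    then show ?thesis by (intro exI[of _ "{}"] exI[of _ a]) auto
  next
    assume "a \<in> Y ` AA"
    then obtain A where "A \<in> AA" "a = Y A" by blast
    then show ?thesis by (intro exI[of _ "{A}"] exI[of _ "{}"]) auto
  qed
next
  case Empty
  then show ?case by (intro exI[of _ "{}"] exI[of _ "{}"]) auto
next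
  case (Compl a)
  then obtain G0 C where "countable G0 \<and> G0 \<subseteq> AA \<and> countable C \<and>
     (\<forall>x y. x \<notin> C \<longrightarrow> y \<notin> C \<longrightarrow> (\<forall>A\<in>G0. x \<in> Y A \<longleftrightarrow> y \<in> Y A) \<longrightarrow> (x \<in> a \<longleftrightarrow> y \<in> a))"
    by blast
  then show ?case by (intro exI[of _ G0] exI[of _ C]) blast
next
  case (Union a)
  define Phi where "Phi i G0 C \<longleftrightarrow> countable G0 \<and> G0 \<subseteq> AA \<and> countable C \<and>
     (\<forall>x y. x \<notin> C \<longrightarrow> y \<notin> C \<longrightarrow> (\<forall>A\<in>G0. x \<in> Y A \<longleftrightarrow> y \<in> Y A) \<longrightarrow> (x \<in> a i \<longleftrightarrow> y \<in> a i))" for i G0 C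
  have "\<forall>i. \<exists>G0 C. Phi i G0 C"
  proof
    fix i show "\<exists>G0 C. Phi i G0 C" unfolding Phi_def by (rule Union.IH)
  qed
  then have "\<exists>G. \<forall>i. \<exists>C. Phi i (G i) C" by (rule choice)
  then obtain G where "\<forall>i. \<exists>C. Phi i (G i) C" by (elim exE)
  then have "\<exists>CC. \<forall>i. Phi i (G i) (CC i)" by (rule choice)
  then obtain CC where GC: "\<forall>i. Phi i (G i) (CC i)" by (elim exE)
  have F1: "countable (G i)" "G i \<subseteq> AA" "countable (CC i)" for i using GC unfolding Phi_def by blast+
  have F2: "\<And>x y. x \<notin> CC i \<Longrightarrow> y \<notin> CC i \<Longrightarrow> (\<forall>A\<in>G i. x \<in> Y A \<longleftrightarrow> y \<in> Y A) \<Longrightarrow> (x \<in> a i \<longleftrightarrow> y \<in> a i)" for i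
    using GC unfolding Phi_def by blast
  show ?case
  proof (intro exI[of _ "\<Union>i. G i"] exI[of _ "\<Union>i. CC i"] conjI allI impI)
    show "countable (\<Union>i. G i)" using F1 by auto
    show "countable (\<Union>i. CC i)" using F1 by auto
    show "(\<Union>i. G i) \<subseteq> AA" using F1 by auto
    fix x y assume xy: "x \<notin> (\<Union>i. CC i)" "y \<notin> (\<Union>i. CC i)"
      "\<forall>A\<in>(\<Union>i. G i). x \<in> Y A \<longleftrightarrow> y \<in> Y A"
    have "x \<in> a i \<longleftrightarrow> y \<in> a i" for i
      by (rule F2) (use xy in blast)+
    then show "x \<in> \<Union> (range a) \<longleftrightarrow> y \<in> \<Union> (range a)" by blast
  qed
qed

lemma points:
  assumes "c_eq_two_less_c" "countable G0" "B \<notin> G0" "countable C"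
  shows "\<exists>p q. p \<notin> C \<and> q \<notin> C \<and> (\<forall>A\<in>G0. p \<in> XB A \<longleftrightarrow> q \<in> XB A) \<and> p \<in> XB B \<and> q \<notin> XB B"
proof -
  have ip: "inj piN" using inj_piN[OF assms(1)] .
  define G1 where "G1 = insert (- B) G0"
  have nB: "- B \<noteq> B"
  proof
    assume "- B = B"
    then have "(0::real) \<in> B \<longleftrightarrow> 0 \<notin> B" by (metis Compl_iff)
    then show False by simp
  qed
  have G1: "G1 \<noteq> {}" "countable G1" "B \<notin> G1" using assms(2,3) nB unfolding G1_def by simp_all
  define a where "a = from_nat_into G1"
  have ra: "range a = G1" unfolding a_def by (rule range_from_nat_into[OF G1(1,2)])
  have anB: "a n \<noteq> B" for n using ra G1 by blast
  have "\<exists>x. (x \<in> B) \<noteq> (x \<in> a n)" for n using anB[of n] by blast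
  then obtain w where w: "\<And>n. (w n \<in> B) \<noteq> (w n \<in> a n)" by metis
  define e where "e r n = (if n = 0 then r else w (n - 1))" for r :: real and n :: nat
  define S where "S r A = piN {n. e r n \<in> A}" for r A
  define P where "P r = (\<lambda>i::nat. if even i then e r (i div 2) else (if i div 2 = 0 then S r B else S r (a (i div 2 - 1))))" for r
  define Q where "Q r = (\<lambda>i::nat. if even i then e r (i div 2) else S r (a (i div 2)))" for r
  have Pe: "P r (2*n) = e r n" for r n unfolding P_def by simp
  have Qe: "Q r (2*n) = e r n" for r n unfolding Q_def by simp
  have Po: "P r (2*k+1) = (if k = 0 then S r B else S r (a (k - 1)))" for r k unfolding P_def by simp
  have Qo: "Q r (2*k+1) = S r (a k)" for r k unfolding Q_def by simp
  have PX: "P r \<in> XB A \<longleftrightarrow> (\<exists>k. P r (2*k+1) = S r A)" for r A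
    unfolding XB_def S_def using Pe by simp
  have QX: "Q r \<in> XB A \<longleftrightarrow> (\<exists>k. Q r (2*k+1) = S r A)" for r A
    unfolding XB_def S_def using Qe by simp
  have inG1: "P r \<in> XB A \<and> Q r \<in> XB A" if AG: "A \<in> G1" for r A
  proof -
    obtain k where k: "A = a k" using AG ra by blast
    have "P r (2*(k+1)+1) = S r A" using Po[of r "k+1"] k by simp
    moreover have "Q r (2*k+1) = S r A" using Qo k by simp
    ultimately show ?thesis using PX QX by blast
  qed
  have PB: "P r \<in> XB B" for r unfolding PX by (rule exI[of _ 0]) (use Po[of r 0] in simp)
  have QB: "Q r \<notin> XB B" for r
  proof -
    have "S r (a k) \<noteq> S r B" for k
    proof
      assume "S r (a k) = S r B"
      then have "{n. e r n \<in> a k} = {n. e r n \<in> B}" using ip unfolding S_def inj_def by blast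
      moreover have "e r (Suc k) = w k" unfolding e_def by simp
      ultimately show False using w[of k] by (metis mem_Collect_eq)
    qed
    then show ?thesis unfolding QX Qo by simp
  qed
  have injP: "inj P"
  proof (rule injI)
    fix r s assume "P r = P s"
    then have "e r 0 = e s 0" using Pe[of r 0] Pe[of s 0] by metis
    then show "r = s" unfolding e_def by simp
  qed
  have injQ: "inj Q"
  proof (rule injI)
    fix r s assume "Q r = Q s"
    then have "e r 0 = e s 0" using Qe[of r 0] Qe[of s 0] by metis
    then show "r = s" unfolding e_def by simp
  qed
  have cP: "countable (P -` C)"
    by (rule countable_image_inj_on[OF countable_subset[OF _ assms(4)]]) (auto intro: inj_on_subset[OF injP])
  have cQ: "countable (Q -` C)"
    by (rule countable_image_inj_on[OF countable_subset[OF _ assms(4)]]) (auto intro: inj_on_subset[OF injQ])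
  have cU: "countable (P -` C \<union> Q -` C)" using cP cQ by simp
  have "(P -` C \<union> Q -` C) \<noteq> UNIV"
  proof
    assume "P -` C \<union> Q -` C = UNIV"
    then show False using cU uncountable_UNIV_real by simp
  qed
  then obtain r where r: "r \<notin> P -` C" "r \<notin> Q -` C" by blast
  have "\<forall>A\<in>G0. P r \<in> XB A \<longleftrightarrow> Q r \<in> XB A" using inG1 unfolding G1_def by blast
  then show ?thesis using r PB QB by blast
qed

lemma mem_Sig:
  assumes "c_eq_two_less_c"
  shows "YB B \<in> Sig AA \<longleftrightarrow> B \<in> AA"
proof
  assume "B \<in> AA"
  then show "YB B \<in> Sig AA" unfolding Sig_def by (auto intro: sigma_sets.Basic)
next
  assume Y: "YB B \<in> Sig AA"
  show "B \<in> AA"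
  proof (rule ccontr)
    assume nB: "B \<notin> AA"
    obtain G0 C where G: "countable G0" "G0 \<subseteq> AA" "countable C"
      "\<And>x y. x \<notin> C \<Longrightarrow> y \<notin> C \<Longrightarrow> (\<forall>A\<in>G0. x \<in> YB A \<longleftrightarrow> y \<in> YB A) \<Longrightarrow> (x \<in> YB B \<longleftrightarrow> y \<in> YB B)"
      using sep_struct[OF Y[unfolded Sig_def]] by blast
    have ig: "inj gS" using inj_gS[OF assms] .
    have cC: "countable (gS -` C)"
      by (rule countable_image_inj_on[OF countable_subset[OF _ G(3)]]) (auto intro: inj_on_subset[OF ig])
    have "B \<notin> G0" using nB G by blast
    then obtain p q where pq: "p \<notin> gS -` C" "q \<notin> gS -` C" "\<forall>A\<in>G0. p \<in> XB A \<longleftrightarrow> q \<in> XB A"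
       "p \<in> XB B" "q \<notin> XB B"
      using points[OF assms G(1) _ cC] by blast
    have mem: "gS z \<in> YB A \<longleftrightarrow> z \<in> XB A" for z A
      unfolding YB_def using ig by (simp add: inj_image_mem_iff)
    have "gS p \<in> YB B \<longleftrightarrow> gS q \<in> YB B"
      using G(4)[of "gS p" "gS q"] pq mem by auto
    then show False using pq mem by auto
  qed
qed

lemma inj_Sig:
  assumes "c_eq_two_less_c"
  shows "inj Sig"
proof (rule injI)
  fix X Y assume "Sig X = Sig Y"
  then show "X = Y" using mem_Sig[OF assms] by blast
qed

definition sbP :: "(real \<times> real) set \<Rightarrow> real set set" where
  "sbP P = sigma_sets UNIV {U. openin (topology_generated_by
     ({{x. (x, r) \<in> P} | r. True} \<union> {{x. (r, x) \<in> P} | r. True})) U}"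

lemma sel_borel_sbP: "sel_borel f = sbP {(x, y). sel_less f x y}"
  unfolding sel_borel_def sbP_def sel_topology_def by simp

lemma T_le:
  assumes "c_eq_two_less_c"
  shows "range sel_borel \<lesssim> {B::real set. 0 \<notin> B}"
proof -
  have "range sel_borel \<lesssim> (UNIV :: (real \<times> real) set set)"
    by (rule subset_image_lepoll[of _ sbP]) (auto simp: sel_borel_sbP)
  also have "(UNIV :: (real \<times> real) set set) \<lesssim> {B::real set. 0 \<notin> B}"
  proof -
    define k where "k = (\<lambda>(x::real, y::real). gS (\<lambda>n. if n = 0 then x else y))"
    have ik: "inj k"
    proof (rule injI)
      fix u v assume kuv: "k u = k v"
      obtain a b where u: "u = (a, b)" by force
      obtain c d where v: "v = (c, d)" by force
      have "(\<lambda>n::nat. if n = 0 then a else b) = (\<lambda>n. if n = 0 then c else d)"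
        using kuv inj_gS[OF assms] unfolding k_def u v inj_def by simp
      then have "a = c" "b = d" by (metis zero_neq_one)+
      then show "u = v" using u v by simp
    qed
    have ie: "inj (exp::real \<Rightarrow> real)" by (simp add: inj_def)
    have "inj (\<lambda>M. exp ` (k ` M))"
      by (intro injI) (metis ik ie inj_image_eq_iff)
    then show ?thesis unfolding lepoll_def by (intro exI[of _ "\<lambda>M. exp ` (k ` M)"]) (auto simp: inj_on_def)
  qed
  finally show ?thesis .
qed

theorem corollary3p11:
  assumes "c_eq_two_less_c"
    and "c_regular"
  shows "{\<Sigma>. sigma_algebra (UNIV::real set) \<Sigma> \<and> {A::real set. countable A} \<subseteq> \<Sigma> \<and>
             (\<forall>f. two_point_selection f \<longrightarrow> \<Sigma> \<noteq> sel_borel f)}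
         \<approx> Pow (Pow (UNIV::real set))"
  (is "?Tgt \<approx> _")
proof -
  define P1 where "P1 = {B::real set. 0 \<in> B}"
  define P2 where "P2 = {B::real set. 0 \<notin> B}"
  define T where "T = range sel_borel"
  have iS: "inj Sig" using inj_Sig[OF assms(1)] .
  have ex: "\<exists>BB. BB \<subseteq> P2 \<and> Sig (AA \<union> BB) \<notin> T" if AA: "AA \<subseteq> P1" for AA
  proof (rule ccontr)
    assume "\<not> ?thesis"
    then have all: "\<And>BB. BB \<subseteq> P2 \<Longrightarrow> Sig (AA \<union> BB) \<in> T" by blast
    have "inj_on (\<lambda>BB. Sig (AA \<union> BB)) (Pow P2)"
    proof (rule inj_onI)
      fix X Y assume XY: "X \<in> Pow P2" "Y \<in> Pow P2" "Sig (AA \<union> X) = Sig (AA \<union> Y)"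
      then have "AA \<union> X = AA \<union> Y" using iS unfolding inj_def by blast
      then have "(AA \<union> X) \<inter> P2 = (AA \<union> Y) \<inter> P2" by simp
      moreover have "AA \<inter> P2 = {}" using AA unfolding P1_def P2_def by auto
      ultimately show "X = Y" using XY by auto
    qed
    then have "Pow P2 \<lesssim> T" unfolding lepoll_def using all by blast
    also have "T \<lesssim> P2" unfolding T_def P2_def using T_le[OF assms(1)] .
    finally have "Pow P2 \<lesssim> P2" .
    then have "P2 \<prec> P2" using lesspoll_Pow_self lesspoll_trans2 by blast
    then show False by simp
  qed
  define E1 where "E1 B = insert (0::real) (exp ` B)" for B
  have E1P1: "E1 ` AA \<subseteq> P1" for AA unfolding E1_def P1_def by auto
  have iE1: "inj E1"
  proof (rule injI)
    fix X Y assume "E1 X = E1 Y"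
    then have "exp ` X = exp ` Y" unfolding E1_def
      by (metis exp_not_eq_zero image_iff insert_ident)
    then show "X = Y" by (metis exp_inj_iff inj_def inj_image_eq_iff)
  qed
  define Psi where "Psi AA = Sig (E1 ` AA \<union> (SOME BB. BB \<subseteq> P2 \<and> Sig (E1 ` AA \<union> BB) \<notin> T))" for AA
  have Psi: "(SOME BB. BB \<subseteq> P2 \<and> Sig (E1 ` AA \<union> BB) \<notin> T) \<subseteq> P2 \<and> Psi AA \<notin> T" for AA
    unfolding Psi_def using someI_ex[OF ex[OF E1P1[of AA]]] by blast
  have "inj Psi"
  proof (rule injI)
    fix X Y assume "Psi X = Psi Y"
    then have eq: "E1 ` X \<union> (SOME BB. BB \<subseteq> P2 \<and> Sig (E1 ` X \<union> BB) \<notin> T) =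
                   E1 ` Y \<union> (SOME BB. BB \<subseteq> P2 \<and> Sig (E1 ` Y \<union> BB) \<notin> T)"
      using iS unfolding Psi_def inj_def by blast
    have d: "P1 \<inter> P2 = {}" unfolding P1_def P2_def by auto
    have "E1 ` X = (E1 ` X \<union> (SOME BB. BB \<subseteq> P2 \<and> Sig (E1 ` X \<union> BB) \<notin> T)) \<inter> P1"
      using Psi[of X] E1P1[of X] d by blast
    also have "\<dots> = (E1 ` Y \<union> (SOME BB. BB \<subseteq> P2 \<and> Sig (E1 ` Y \<union> BB) \<notin> T)) \<inter> P1"
      using eq by simp
    also have "\<dots> = E1 ` Y"
      using Psi[of Y] E1P1[of Y] d by blast
    finally show "X = Y" using iE1 by (simp add: inj_image_eq_iff)
  qed
  moreover have "Psi AA \<in> ?Tgt" for AA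
  proof -
    have "sigma_algebra UNIV (Psi AA)" unfolding Psi_def Sig_def
      by (rule sigma_algebra_sigma_sets) auto
    moreover have "{A::real set. countable A} \<subseteq> Psi AA" unfolding Psi_def Sig_def
      by (auto intro: sigma_sets.Basic)
    moreover have "Psi AA \<noteq> sel_borel f" for f using Psi[of AA] unfolding T_def by auto
    ultimately show ?thesis by blast
  qed
  ultimately have "Pow (Pow (UNIV::real set)) \<lesssim> ?Tgt"
    unfolding lepoll_def by (intro exI[of _ Psi]) (auto simp: inj_on_def inj_def)
  moreover have "?Tgt \<lesssim> Pow (Pow (UNIV::real set))" by (rule subset_imp_lepoll) auto
  ultimately show ?thesis using lepoll_antisym by blast
qed

end
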